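(* Let $V$ be a finite-dimensional real vector space, $\phi\in\mathrm{End}(V)\setminus\{0\}$, $W=\mathrm{im}(\phi)$, $\alpha\in V^*$ and $c\in C_{sl}(W)$. Then the Lie quasi-state $\zeta_{\alpha,c}$ on $\mathfrak{g}_\phi$ is invariant under the adjoint group of $\mathfrak{g}_\phi$ if and only if (i) $\mathrm{im}\,\phi\subset\ker\alpha$, and (ii) $c$ is constant on cosets of $\mathrm{im}\,\phi^2$ in $W$, i.e. $c(w+u)=c(w)$ for all $w\in W$, $u\in\mathrm{im}\,\phi^2$ (so $c$ descends to a function on $W/\mathrm{im}\,\phi^2$).
   Context: $\mathfrak{g}_\phi$ is $V\times\mathbb{R}$ with bracket $[(v,s),(w,t)]=(s\phi(w)-t\phi(v),0)$. $C_{sl}(W)$ is the space of continuous functions $c:W\to\mathbb{R}$ with $c(w)/\|w\|\to0$ as $w\to\infty$. $\zeta_{\alpha,c}:\mathfrak{g}_\phi\to\mathbb{R}$ is defined by $\zeta_{\alpha,c}(v,t)=c(\phi(v)/t)\,t+\alpha(v)$ for $t\ne0$ and $\zeta_{\alpha,c}(v,0)=\alpha(v)$; it is a continuous Lie quasi-state (a function linear on every abelian subalgebra). Ad-invariance means $\zeta(\exp(\mathrm{ad}(Y))X)=\zeta(X)$ for all $X,Y\in\mathfrak{g}_\phi$. *)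

theory Defs
  imports "HOL-Analysis.Analysis"
begin

text \<open>The Lie algebra g_phi is modelled on V \<times> real, V a finite-dimensional
  real vector space (type class euclidean_space).\<close>

definition gbracket :: "('v::euclidean_space \<Rightarrow> 'v) \<Rightarrow> 'v \<times> real \<Rightarrow> 'v \<times> real \<Rightarrow> 'v \<times> real" where
  "gbracket \<phi> X Y = (snd X *\<^sub>R \<phi> (fst Y) - snd Y *\<^sub>R \<phi> (fst X), 0)"

definition gad :: "('v::euclidean_space \<Rightarrow> 'v) \<Rightarrow> 'v \<times> real \<Rightarrow> ('v \<times> real \<Rightarrow> 'v \<times> real)" where
  "gad \<phi> Y = gbracket \<phi> Y"

definition exp_ad :: "('v::euclidean_space \<Rightarrow> 'v) \<Rightarrow> 'v \<times> real \<Rightarrow> 'v \<times> real \<Rightarrow> 'v \<times> real" where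
  "exp_ad \<phi> Y X = (\<Sum>n. (1 / fact n) *\<^sub>R ((gad \<phi> Y ^^ n) X))"

definition C_sl :: "'v::euclidean_space set \<Rightarrow> ('v \<Rightarrow> real) set" where
  "C_sl W = {c. continuous_on W c \<and>
      filterlim (\<lambda>w. c w / norm w) (nhds 0) (inf at_infinity (principal W))}"

definition zeta :: "('v::euclidean_space \<Rightarrow> 'v) \<Rightarrow> ('v \<Rightarrow> real) \<Rightarrow> ('v \<Rightarrow> real) \<Rightarrow> 'v \<times> real \<Rightarrow> real" where
  "zeta \<phi> \<alpha> c X = (if snd X \<noteq> 0 then c ((1 / snd X) *\<^sub>R \<phi> (fst X)) * snd X + \<alpha> (fst X)
                     else \<alpha> (fst X))"

definition ad_invariant :: "('v::euclidean_space \<Rightarrow> 'v) \<Rightarrow> ('v \<times> real \<Rightarrow> real) \<Rightarrow> bool" where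
  "ad_invariant \<phi> \<zeta> \<longleftrightarrow> (\<forall>X Y. \<zeta> (exp_ad \<phi> Y X) = \<zeta> X)"

end

theory Submission
  imports Defs
begin

lemma gad_linear:
  assumes "linear \<phi>"
  shows "linear (gad \<phi> Y)"
  unfolding gad_def gbracket_def
  by (rule linearI) (auto simp: linear_add[OF assms] linear_scale[OF assms] algebra_simps scaleR_add_right)

lemma gad_range:
  assumes "linear \<phi>"
  shows "gad \<phi> Y p = (\<phi> (snd Y *\<^sub>R fst p - snd p *\<^sub>R fst Y), 0)"
  unfolding gad_def gbracket_def
  by (simp add: linear_diff[OF assms] linear_scale[OF assms])

lemma exp_ad_summable:
  assumes "linear \<phi>"
  shows "summable (\<lambda>n. (1 / fact n) *\<^sub>R ((gad \<phi> Y ^^ n) X))"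
proof -
  have "bounded_linear (gad \<phi> Y)" using gad_linear[OF assms] linear_conv_bounded_linear by blast
  then obtain K where K: "K > 0" "\<And>x. norm (gad \<phi> Y x) \<le> norm x * K"
    using bounded_linear.pos_bounded by blast
  have b: "norm ((gad \<phi> Y ^^ n) X) \<le> norm X * K ^ n" for n
  proof (induction n)
    case 0 then show ?case by simp
  next
    case (Suc n)
    have "norm ((gad \<phi> Y ^^ Suc n) X) \<le> norm ((gad \<phi> Y ^^ n) X) * K" using K(2) by simp
    also have "\<dots> \<le> norm X * K ^ n * K" using Suc K(1) by (simp add: mult_right_mono)
    finally show ?case by (simp add: algebra_simps)
  qed
  show ?thesis
  proof (rule summable_comparison_test)
    show "\<exists>N. \<forall>n\<ge>N. norm ((1 / fact n) *\<^sub>R ((gad \<phi> Y ^^ n) X)) \<le> norm X * (inverse (fact n) * K ^ n)"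
    proof (intro exI allI impI)
      fix n :: nat
      have "norm ((1 / fact n) *\<^sub>R ((gad \<phi> Y ^^ n) X)) = (1 / fact n) * norm ((gad \<phi> Y ^^ n) X)"
        by simp
      also have "\<dots> \<le> (1 / fact n) * (norm X * K ^ n)" using b[of n] by (intro mult_left_mono) auto
      finally show "norm ((1 / fact n) *\<^sub>R ((gad \<phi> Y ^^ n) X)) \<le> norm X * (inverse (fact n) * K ^ n)"
        by (simp add: field_simps)
    qed
    show "summable (\<lambda>n. norm X * (inverse (fact n) * K ^ n))"
      by (intro summable_mult summable_exp)
  qed
qed

lemma exp_ad_form:
  assumes "linear \<phi>"
  shows "\<exists>r. exp_ad \<phi> Y X = (fst X + \<phi> r, snd X)"
proof -
  define f where "f = (\<lambda>n. (1 / fact n) *\<^sub>R ((gad \<phi> Y ^^ n) X))"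
  have sf: "summable f" unfolding f_def by (rule exp_ad_summable[OF assms])
  define R where "R = range (\<lambda>x. (\<phi> x, 0::real))"
  have linR: "linear (\<lambda>x. (\<phi> x, 0::real))"
    by (rule linearI) (auto simp: linear_add[OF assms] linear_scale[OF assms])
  have subR: "subspace R" unfolding R_def
    by (rule linear_subspace_image[OF linR subspace_UNIV])
  have clR: "closed R" by (rule closed_subspace[OF subR])
  have inR: "f (Suc n) \<in> R" for n
  proof -
    have "(gad \<phi> Y ^^ Suc n) X = gad \<phi> Y ((gad \<phi> Y ^^ n) X)" by simp
    then have "(gad \<phi> Y ^^ Suc n) X \<in> R" unfolding R_def by (simp add: gad_range[OF assms])
    then show ?thesis unfolding f_def by (rule subspace_scale[OF subR])
  qed
  have s1: "summable (\<lambda>n. f (Suc n))" using sf summable_ignore_initial_segment[of f 1] by simp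
  have "(\<lambda>n. \<Sum>i<n. f (Suc i)) \<longlonglongrightarrow> (\<Sum>n. f (Suc n))" by (rule summable_LIMSEQ[OF s1])
  moreover have "(\<Sum>i<n. f (Suc i)) \<in> R" for n
    by (rule subspace_sum[OF subR]) (use inR in auto)
  ultimately have "(\<Sum>n. f (Suc n)) \<in> R" using closed_sequentially[OF clR, of "\<lambda>n. \<Sum>i<n. f (Suc i)"] by blast
  then obtain r where r: "(\<Sum>n. f (Suc n)) = (\<phi> r, 0)" unfolding R_def by blast
  have "exp_ad \<phi> Y X = suminf f" unfolding exp_ad_def f_def ..
  also have "\<dots> = f 0 + (\<Sum>n. f (Suc n))" using suminf_split_head[OF sf] by simp
  also have "\<dots> = X + (\<phi> r, 0)" using r by (simp add: f_def)
  finally show ?thesis by (cases X) auto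
qed

lemma exp_ad_s0:
  assumes "linear \<phi>"
  shows "exp_ad \<phi> (w, 0) (v, t) = (v - t *\<^sub>R \<phi> w, t)"
proof -
  define f where "f = (\<lambda>n. (1 / fact n) *\<^sub>R ((gad \<phi> (w,0) ^^ n) (v,t)))"
  have g1: "gad \<phi> (w,0) (v,t) = (- t *\<^sub>R \<phi> w, 0)" by (simp add: gad_def gbracket_def)
  have g0: "gad \<phi> (w,0) p = (- snd p *\<^sub>R \<phi> w, 0)" for p by (simp add: gad_def gbracket_def)
  have z: "(gad \<phi> (w,0) ^^ Suc (Suc n)) (v,t) = 0" for n
  proof (induction n)
    case 0 show ?case by (simp add: g1 g0 zero_prod_def)
  next
    case (Suc n)
    have "(gad \<phi> (w,0) ^^ Suc (Suc (Suc n))) (v,t) = gad \<phi> (w,0) ((gad \<phi> (w,0) ^^ Suc (Suc n)) (v,t))" by simp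
    then show ?case using Suc by (simp add: g0 zero_prod_def)
  qed
  have "f n = 0" if "n \<notin> {0,1}" for n
  proof -
    obtain m where "n = Suc (Suc m)" proof
      show "n = Suc (Suc (n - 2))" using \<open>n \<notin> {0,1}\<close> by (simp add: numeral_2_eq_2, arith)
    qed
    then show ?thesis unfolding f_def using z by simp
  qed
  then have "suminf f = (\<Sum>n\<in>{0,1}. f n)" by (intro suminf_finite) auto
  also have "\<dots> = (v - t *\<^sub>R \<phi> w, t)" by (simp add: f_def g1)
  finally show ?thesis unfolding exp_ad_def f_def .
qed

lemma key_alpha:
  fixes \<phi> :: "'v::euclidean_space \<Rightarrow> 'v" and \<alpha> :: "'v \<Rightarrow> real" and c :: "'v \<Rightarrow> real"
  assumes lin: "linear \<phi>" and la: "linear \<alpha>" and cs: "c \<in> C_sl (range \<phi>)"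
    and key: "\<And>v w. c (\<phi> v - \<phi> (\<phi> w)) = c (\<phi> v) + \<alpha> (\<phi> w)"
  shows "\<alpha> (\<phi> w) = 0"
proof -
  define a where "a = \<alpha> (\<phi> w)"
  define u where "u = \<phi> (\<phi> w)"
  define p where "p = (\<lambda>n::nat. \<phi> ((- real n) *\<^sub>R \<phi> w))"
  have pn: "p n = (- real n) *\<^sub>R u" for n unfolding p_def u_def by (simp add: linear_scale[OF lin] linear_neg[OF lin])
  have cp: "c (p n) = c 0 + real n * a" for n
  proof (induction n)
    case 0 show ?case by (simp add: pn)
  next
    case (Suc n)
    have "p (Suc n) = \<phi> ((- real n) *\<^sub>R \<phi> w) - \<phi> (\<phi> w)"
      proof -
      have "p (Suc n) = p n - u" unfolding pn by (simp add: algebra_simps)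
      then show ?thesis unfolding p_def u_def by simp
    qed
    then have "c (p (Suc n)) = c (p n) + a" using key unfolding p_def a_def by simp
    then show ?case using Suc by (simp add: algebra_simps)
  qed
  show ?thesis
  proof (cases "u = 0")
    case True
    have "c (\<phi> 0 - \<phi> (\<phi> w)) = c (\<phi> 0) + \<alpha> (\<phi> w)" by (rule key)
    then show ?thesis using True unfolding u_def by (simp add: linear_0[OF lin])
  next
    case False
    then have nu: "norm u > 0" by simp
    have lim1: "filterlim (\<lambda>w. c w / norm w) (nhds 0) (inf at_infinity (principal (range \<phi>)))"
      using cs unfolding C_sl_def by blast
    have "filterlim (\<lambda>n. norm u * real n) at_top sequentially"
      by (rule filterlim_tendsto_pos_mult_at_top[OF tendsto_const nu filterlim_real_sequentially])
    then have "filterlim (\<lambda>n. norm (p n)) at_top sequentially" by (simp add: pn mult.commute)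
    then have "filterlim p at_infinity sequentially" by (rule filterlim_norm_at_top_imp_at_infinity)
    moreover have "filterlim p (principal (range \<phi>)) sequentially"
      unfolding filterlim_principal p_def by simp
    ultimately have "filterlim p (inf at_infinity (principal (range \<phi>))) sequentially"
      by (simp add: filterlim_inf)
    from filterlim_compose[OF lim1 this]
    have h: "(\<lambda>n. c (p n) / norm (p n)) \<longlonglongrightarrow> 0" .
    have "(\<lambda>n. c (p n) / norm (p n) * norm u - c 0 / real n) \<longlonglongrightarrow> 0 * norm u - 0"
      by (intro tendsto_intros h)
    moreover have "eventually (\<lambda>n. c (p n) / norm (p n) * norm u - c 0 / real n = a) sequentially"
      using eventually_gt_at_top[of "0::nat"]
    proof eventually_elim
      case (elim n)
      then show ?case using nu cp[of n] by (simp add: pn field_simps)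
    qed
    ultimately have "(\<lambda>n. a) \<longlonglongrightarrow> 0" using tendsto_cong by fastforce
    then show ?thesis unfolding a_def by (simp add: LIMSEQ_const_iff)
  qed
qed

theorem mainTheorem11:
  fixes \<phi> :: "'v::euclidean_space \<Rightarrow> 'v" and \<alpha> :: "'v \<Rightarrow> real" and c :: "'v \<Rightarrow> real"
  assumes "linear \<phi>" and "\<phi> \<noteq> (\<lambda>v. 0)"
    and "linear \<alpha>"
    and "c \<in> C_sl (range \<phi>)"
  shows "ad_invariant \<phi> (zeta \<phi> \<alpha> c) \<longleftrightarrow>
           ((\<forall>v. \<alpha> (\<phi> v) = 0) \<and>
            (\<forall>w\<in>range \<phi>. \<forall>u\<in>range (\<phi> \<circ> \<phi>). c (w + u) = c w))"
proof
  assume inv: "ad_invariant \<phi> (zeta \<phi> \<alpha> c)"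
  have key: "c (\<phi> v - \<phi> (\<phi> w)) = c (\<phi> v) + \<alpha> (\<phi> w)" for v w
  proof -
    have "zeta \<phi> \<alpha> c (exp_ad \<phi> (w, 0) (v, 1)) = zeta \<phi> \<alpha> c (v, 1)"
      using inv unfolding ad_invariant_def by blast
    then show ?thesis
      by (simp add: exp_ad_s0[OF assms(1)] zeta_def linear_diff[OF assms(1)] linear_diff[OF assms(3)])
  qed
  have A: "\<alpha> (\<phi> w) = 0" for w by (rule key_alpha[OF assms(1,3,4) key])
  show "(\<forall>v. \<alpha> (\<phi> v) = 0) \<and> (\<forall>w\<in>range \<phi>. \<forall>u\<in>range (\<phi> \<circ> \<phi>). c (w + u) = c w)"
  proof (intro conjI allI ballI)
    fix v show "\<alpha> (\<phi> v) = 0" by (rule A)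
  next
    fix w u assume "w \<in> range \<phi>" "u \<in> range (\<phi> \<circ> \<phi>)"
    then obtain v y where wy: "w = \<phi> v" "u = \<phi> (\<phi> y)" by auto
    have "c (\<phi> v - \<phi> (\<phi> (- y))) = c (\<phi> v) + \<alpha> (\<phi> (- y))" by (rule key)
    then show "c (w + u) = c w" using A[of "-y"] wy
      by (simp add: linear_neg[OF assms(1)])
  qed
next
  assume H: "(\<forall>v. \<alpha> (\<phi> v) = 0) \<and> (\<forall>w\<in>range \<phi>. \<forall>u\<in>range (\<phi> \<circ> \<phi>). c (w + u) = c w)"
  show "ad_invariant \<phi> (zeta \<phi> \<alpha> c)"
    unfolding ad_invariant_def
  proof (intro allI)
    fix X Y :: "'v \<times> real"
    obtain v t where X: "X = (v, t)" by (cases X)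
    obtain r where r: "exp_ad \<phi> Y X = (v + \<phi> r, t)" using exp_ad_form[OF assms(1), of Y X] X by auto
    have al: "\<alpha> (v + \<phi> r) = \<alpha> v" using H by (simp add: linear_add[OF assms(3)])
    show "zeta \<phi> \<alpha> c (exp_ad \<phi> Y X) = zeta \<phi> \<alpha> c X"
    proof (cases "t = 0")
      case True then show ?thesis using r X al by (simp add: zeta_def)
    next
      case False
      have e: "(1 / t) *\<^sub>R \<phi> (v + \<phi> r) = \<phi> ((1/t) *\<^sub>R v) + (\<phi> \<circ> \<phi>) ((1/t) *\<^sub>R r)"
        by (simp add: linear_add[OF assms(1)] linear_scale[OF assms(1)] scaleR_add_right)
      have "c ((1 / t) *\<^sub>R \<phi> (v + \<phi> r)) = c (\<phi> ((1/t) *\<^sub>R v))"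
        unfolding e using H by blast
      also have "\<phi> ((1/t) *\<^sub>R v) = (1 / t) *\<^sub>R \<phi> v" by (simp add: linear_scale[OF assms(1)])
      finally show ?thesis using r X al False by (simp add: zeta_def)
    qed
  qed
qed

end
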